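(* Let $\mathcal{X},\mathcal{Y}$ be finite sets and $n\ge1$. Let $\tilde{\Phi}_n=(\tilde{\varphi}_0,\tilde{\varphi}_2,\tilde{\psi})$ be a WAK code of blocklength $n$ with message sets $\tilde{\mathcal{M}}_0,\tilde{\mathcal{M}}_2$, and let $P_{\bar X\bar Y}\in\mathcal{P}_n(\mathcal{X}\times\mathcal{Y})$ be a joint type with $\log|\mathcal{T}^n_{\bar X}|\ge\log|\tilde{\mathcal{M}}_0|$, where $\mathcal{T}^n_{\bar X}$ is the type class of the marginal type $P_{\bar X}$. Then there exists another WAK code $\hat{\Phi}_n=(\hat{\varphi}_0,\hat{\varphi}_2,\hat{\psi})$ with message sets $\hat{\mathcal{M}}_0,\hat{\mathcal{M}}_2$ such that \begin{align*} \log|\hat{\mathcal{M}}_0| &\le \log|\tilde{\mathcal{M}}_0|+\log n+\log\log|\mathcal{X}|+2,\\ \log|\hat{\mathcal{M}}_2| &= \log|\tilde{\mathcal{M}}_2|,\\ \mathrm{P}_{\mathtt{WAK}}(\hat{\Phi}_n\mid P_{\mathcal{T}^n_{\bar X\bar Y}}) &\le \mathrm{P}_{\mathtt{WAK}}(\tilde{\Phi}_n\mid P_{\mathcal{T}^n_{\bar X\bar Y}}), \end{align*} and for every $m\in\hat{\mathcal{M}}_0$, $$\log|\hat{\varphi}_0^{-1}(m)\cap\mathcal{T}^n_{\bar X}|\le\log\frac{|\mathcal{T}^n_{\bar X}|}{|\tilde{\mathcal{M}}_0|}.$$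
   Context: All logarithms are base 2. $\mathcal{P}_n(\mathcal{X}\times\mathcal{Y})$ is the set of joint types of sequences in $\mathcal{X}^n\times\mathcal{Y}^n$; for a joint type $P_{\bar X\bar Y}$, $\mathcal{T}^n_{\bar X\bar Y}$ is its type class and $P_{\mathcal{T}^n_{\bar X\bar Y}}$ is the uniform distribution on $\mathcal{T}^n_{\bar X\bar Y}$. A WAK code of blocklength $n$ is a triple $(\tilde{\varphi}_0,\tilde{\varphi}_2,\tilde{\psi})$ of maps $\tilde{\varphi}_0:\mathcal{X}^n\to\tilde{\mathcal{M}}_0$, $\tilde{\varphi}_2:\mathcal{Y}^n\to\tilde{\mathcal{M}}_2$, $\tilde{\psi}:\tilde{\mathcal{M}}_0\times\tilde{\mathcal{M}}_2\to\mathcal{Y}^n$, with finite sets $\tilde{\mathcal{M}}_0,\tilde{\mathcal{M}}_2$. For $(X^n,Y^n)\sim P$, $\mathrm{P}_{\mathtt{WAK}}(\tilde{\Phi}_n\mid P)$ is the probability that $\tilde{\psi}(\tilde{\varphi}_0(X^n),\tilde{\varphi}_2(Y^n))\ne Y^n$. *)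

theory Defs
  imports Complex_Main
begin

definition seqs :: "nat \<Rightarrow> 'a list set" where
  "seqs n = {xs. length xs = n}"

definition joint_type :: "'x list \<Rightarrow> 'y list \<Rightarrow> ('x \<times> 'y \<Rightarrow> real)" where
  "joint_type xs ys = (\<lambda>ab. real (count_list (zip xs ys) ab) / real (length xs))"

definition joint_types :: "nat \<Rightarrow> ('x \<times> 'y \<Rightarrow> real) set" where
  "joint_types n = {joint_type xs ys | xs ys. xs \<in> seqs n \<and> ys \<in> seqs n}"

definition joint_type_class :: "nat \<Rightarrow> ('x \<times> 'y \<Rightarrow> real) \<Rightarrow> ('x list \<times> 'y list) set" where
  "joint_type_class n P = {(xs, ys). xs \<in> seqs n \<and> ys \<in> seqs n \<and> joint_type xs ys = P}"

definition marginal_x :: "('x \<times> 'y::finite \<Rightarrow> real) \<Rightarrow> ('x \<Rightarrow> real)" where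
  "marginal_x P = (\<lambda>a. \<Sum>b\<in>UNIV. P (a, b))"

definition tclass :: "nat \<Rightarrow> ('x \<Rightarrow> real) \<Rightarrow> 'x list set" where
  "tclass n Q = {xs. xs \<in> seqs n \<and> (\<forall>a. real (count_list xs a) / real n = Q a)}"

definition wak_code :: "nat \<Rightarrow> nat set \<Rightarrow> nat set \<Rightarrow> ('x list \<Rightarrow> nat) \<Rightarrow> ('y list \<Rightarrow> nat)
    \<Rightarrow> (nat \<Rightarrow> nat \<Rightarrow> 'y list) \<Rightarrow> bool" where
  "wak_code n M0 M2 phi0 phi2 psi \<longleftrightarrow>
     finite M0 \<and> finite M2 \<and>
     (\<forall>xs\<in>seqs n. phi0 xs \<in> M0) \<and> (\<forall>ys\<in>seqs n. phi2 ys \<in> M2) \<and>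
     (\<forall>m0\<in>M0. \<forall>m2\<in>M2. psi m0 m2 \<in> seqs n)"

(* Error probability of the code under the uniform distribution on a finite set S of sequence pairs. *)
definition wak_error_unif :: "('x list \<Rightarrow> nat) \<Rightarrow> ('y list \<Rightarrow> nat) \<Rightarrow> (nat \<Rightarrow> nat \<Rightarrow> 'y list)
    \<Rightarrow> ('x list \<times> 'y list) set \<Rightarrow> real" where
  "wak_error_unif phi0 phi2 psi S =
     real (card {(xs, ys) \<in> S. psi (phi0 xs) (phi2 ys) \<noteq> ys}) / real (card S)"

end

theory Submission
  imports Defs "HOL-Library.Nat_Bijection"
begin

lemma div_eq_card_le:
  fixes k j :: nat and A :: "'a set" and h :: "'a \<Rightarrow> nat"
  assumes "k > 0" "inj_on h A" "\<forall>x\<in>A. h x div k = j"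
  shows "card A \<le> k"
proof -
  have "h ` A \<subseteq> {j*k..<j*k+k}"
  proof
    fix y assume "y \<in> h ` A"
    then have "y div k = j" using assms(3) by auto
    have e: "y = j*k + y mod k" using div_mult_mod_eq[of y k] \<open>y div k = j\<close> by simp
    have "y mod k < k" using assms(1) by simp
    then show "y \<in> {j*k..<j*k+k}" using e by (simp only: atLeastLessThan_iff) linarith
  qed
  then have "card (h ` A) \<le> card {j*k..<j*k+k}" by (intro card_mono) simp_all
  then have "card (h ` A) \<le> k" by simp
  then show ?thesis using assms(2) card_image by metis
qed

lemma log0 [simp]: "log 2 (0::real) = 0" by (simp add: log_def)

lemma seqs_finite: "finite (seqs n :: 'a::finite list set)"
proof -
  have "seqs n = {xs::'a list. set xs \<subseteq> UNIV \<and> length xs = n}" by (simp add: seqs_def)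
  then show ?thesis using finite_lists_length_eq[of "UNIV :: 'a set" n] by simp
qed

theorem lemma1:
  fixes n :: nat
    and M0 M2 :: "nat set"
    and phi0 :: "'x::finite list \<Rightarrow> nat" and phi2 :: "'y::finite list \<Rightarrow> nat"
    and psi :: "nat \<Rightarrow> nat \<Rightarrow> 'y list"
    and P :: "'x \<times> 'y \<Rightarrow> real"
  assumes "n \<ge> 1"
    and "wak_code n M0 M2 phi0 phi2 psi"
    and "P \<in> joint_types n"
    and "log 2 (card (tclass n (marginal_x P))) \<ge> log 2 (card M0)"
  shows "\<exists>M0' M2' (phi0' :: 'x list \<Rightarrow> nat) (phi2' :: 'y list \<Rightarrow> nat) (psi' :: nat \<Rightarrow> nat \<Rightarrow> 'y list).
           wak_code n M0' M2' phi0' phi2' psi' \<and>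
           log 2 (card M0') \<le> log 2 (card M0) + log 2 n + log 2 (log 2 (card (UNIV :: 'x set))) + 2 \<and>
           log 2 (card M2') = log 2 (card M2) \<and>
           wak_error_unif phi0' phi2' psi' (joint_type_class n P)
             \<le> wak_error_unif phi0 phi2 psi (joint_type_class n P) \<and>
           (\<forall>m\<in>M0'. log 2 (card {xs \<in> tclass n (marginal_x P). phi0' xs = m})
              \<le> log 2 (real (card (tclass n (marginal_x P))) / real (card M0)))"
proof -
  define T where "T = tclass n (marginal_x P)"
  define B where "B m = {x\<in>T. phi0 x = m}" for m
  define k where "k = card T div card M0"
  define h where "h m = (SOME g. bij_betw g (B m) {0..<card (B m)})" for m
  define phi0' where "phi0' x = prod_encode (phi0 x, if x \<in> T then h (phi0 x) x div k else 0)" for x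
  define psi' where "psi' l m2 = psi (fst (prod_decode l)) m2" for l m2
  define M0' where "M0' = phi0' ` seqs n"
  have wc: "finite M0" "finite M2" "\<forall>xs\<in>seqs n. phi0 xs \<in> M0" "\<forall>ys\<in>seqs n. phi2 ys \<in> M2"
    "\<forall>m0\<in>M0. \<forall>m2\<in>M2. psi m0 m2 \<in> seqs n"
    using assms(2) unfolding wak_code_def by auto
  have fin: "finite (seqs n :: 'x list set)" by (rule seqs_finite)
  have Tsub: "T \<subseteq> seqs n" unfolding T_def tclass_def by auto
  have finT: "finite T" using fin Tsub finite_subset by blast
  have finB: "finite (B m)" for m using finT unfolding B_def by auto
  have hbij: "bij_betw (h m) (B m) {0..<card (B m)}" for m
    unfolding h_def using someI_ex[OF ex_bij_betw_finite_nat[OF finB[of m]]] by simp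
  have "replicate n undefined \<in> seqs n" by (simp add: seqs_def)
  then have M0ne: "M0 \<noteq> {}" using wc(3) by blast
  then have M0pos: "card M0 \<ge> 1" using wc(1) by (simp add: Suc_le_eq card_gt_0_iff)
  have TM: "card M0 \<le> card T" if "T \<noteq> {}"
  proof -
    have "card T > 0" using that finT by (simp add: card_gt_0_iff)
    then show ?thesis using assms(4) M0pos unfolding T_def[symmetric]
      by (simp add: log_le_cancel_iff)
  qed
  have kpos: "k \<ge> 1" if "T \<noteq> {}" using TM[OF that] M0pos unfolding k_def
    by (simp add: div_greater_zero_iff Suc_le_eq)
  have bin: "card {xs \<in> T. phi0' xs = l} \<le> k" for l
  proof (cases "{xs \<in> T. phi0' xs = l} = {}")
    case True then show ?thesis by (metis card.empty le0)
  next
    case False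
    then obtain x0 where x0: "x0 \<in> T" "phi0' x0 = l" by auto
    define m where "m = phi0 x0"
    define j where "j = h m x0 div k"
    have sub: "{xs \<in> T. phi0' xs = l} \<subseteq> B m" and eqj: "\<forall>x\<in>{xs \<in> T. phi0' xs = l}. h m x div k = j"
      using x0 unfolding phi0'_def B_def m_def j_def by (auto simp: prod_encode_eq)
    have "inj_on (h m) {xs \<in> T. phi0' xs = l}"
      using hbij[of m] sub by (meson bij_betw_def inj_on_subset)
    then show ?thesis using div_eq_card_le[OF _ _ eqj] kpos x0 by auto
  qed
  have cardT: "card T = (\<Sum>m\<in>M0. card (B m))"
  proof -
    have "T = (\<Union>m\<in>M0. B m)" using Tsub wc(3) unfolding B_def by auto
    then show ?thesis using card_UN_disjoint[of M0 B] wc(1) finB unfolding B_def by auto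
  qed
  have sumle: "(\<Sum>m\<in>M0. card (B m) div k) \<le> 2 * card M0"
  proof (cases "T = {}")
    case True then show ?thesis unfolding B_def by simp
  next
    case False
    have k1: "k \<ge> 1" using kpos[OF False] .
    have "k * (\<Sum>m\<in>M0. card (B m) div k) = (\<Sum>m\<in>M0. k * (card (B m) div k))"
      by (simp add: sum_distrib_left)
    also have "\<dots> \<le> (\<Sum>m\<in>M0. card (B m))"
      by (rule sum_mono) (simp add: times_div_less_eq_dividend)
    also have "\<dots> = card T" using cardT by simp
    also have "\<dots> < card M0 * (k + 1)"
    proof -
      have "card T = card M0 * k + card T mod card M0" unfolding k_def by simp
      moreover have "card T mod card M0 < card M0" using M0pos by simp
      ultimately show ?thesis by simp
    qed
    also have "\<dots> \<le> k * (2 * card M0)" using k1 by (simp add: algebra_simps)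
    finally show ?thesis using k1 by (simp add: mult_less_cancel1 less_imp_le)
  qed
  have M0sub: "M0' \<subseteq> prod_encode ` (SIGMA m:M0. {..card (B m) div k})"
  proof
    fix l assume "l \<in> M0'"
    then obtain x where x: "x \<in> seqs n" "l = phi0' x" unfolding M0'_def by auto
    have pm: "phi0 x \<in> M0" using x wc(3) by auto
    show "l \<in> prod_encode ` (SIGMA m:M0. {..card (B m) div k})"
    proof (cases "x \<in> T")
      case True
      then have "x \<in> B (phi0 x)" unfolding B_def by simp
      then have "h (phi0 x) x < card (B (phi0 x))" using hbij[of "phi0 x"]
        by (auto simp: bij_betw_def)
      then have "h (phi0 x) x div k \<le> card (B (phi0 x)) div k" by (simp add: div_le_mono)
      then show ?thesis using x pm True unfolding phi0'_def by auto
    next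
      case False then show ?thesis using x pm unfolding phi0'_def by auto
    qed
  qed
  have cardM0': "card M0' \<le> 3 * card M0"
  proof -
    have "card M0' \<le> card (prod_encode ` (SIGMA m:M0. {..card (B m) div k}))"
      by (rule card_mono[OF _ M0sub]) (use wc(1) in auto)
    also have "\<dots> \<le> card (SIGMA m:M0. {..card (B m) div k})" by (rule card_image_le) (use wc(1) in auto)
    also have "\<dots> = (\<Sum>m\<in>M0. card (B m) div k + 1)" using wc(1) by (simp add: card_SigmaI)
    also have "\<dots> = (\<Sum>m\<in>M0. card (B m) div k) + card M0" by (simp add: sum_Suc)
    also have "\<dots> \<le> 3 * card M0" using sumle by simp
    finally show ?thesis .
  qed
  have logM0': "log 2 (card M0') \<le> log 2 (card M0) + 2"
  proof (cases "card M0' = 0")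
    case True then show ?thesis using M0pos by simp
  next
    case False
    have "log 2 (card M0') \<le> log 2 (4 * card M0)"
      using False cardM0' M0pos by (subst log_le_cancel_iff) auto
    also have "\<dots> = log 2 4 + log 2 (card M0)" using M0pos by (simp add: log_mult)
    also have "log 2 (4::real) = 2"
    proof -
      have "log 2 (4::real) = log 2 (2^2)" by simp
      also have "\<dots> = 2" by (subst log_nat_power) simp_all
      finally show ?thesis .
    qed
    finally show ?thesis by simp
  qed
  have logn: "log 2 (real n) \<ge> 0" using assms(1) by simp
  have logX: "log 2 (log 2 (card (UNIV :: 'x set))) \<ge> 0"
  proof -
    have c: "card (UNIV :: 'x set) \<ge> 1" by (simp add: Suc_le_eq card_gt_0_iff)
    show ?thesis
    proof (cases "card (UNIV :: 'x set) = 1")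
      case True then show ?thesis by simp
    next
      case False
      then have "real (card (UNIV :: 'x set)) \<ge> 2" using c by linarith
      then have "log 2 (card (UNIV :: 'x set)) \<ge> 1" by simp
      then show ?thesis by simp
    qed
  qed
  have wc': "wak_code n M0' M2 phi0' phi2 psi'"
    unfolding wak_code_def
  proof (intro conjI ballI)
    show "finite M0'" unfolding M0'_def using fin by simp
    show "finite M2" by (rule wc(2))
    show "phi0' xs \<in> M0'" if "xs \<in> seqs n" for xs using that unfolding M0'_def by simp
    show "phi2 ys \<in> M2" if "ys \<in> seqs n" for ys using that wc(4) by simp
    show "psi' m0 m2 \<in> seqs n" if "m0 \<in> M0'" "m2 \<in> M2" for m0 m2
    proof -
      have "m0 \<in> phi0' ` seqs n" using that(1) unfolding M0'_def .
      then obtain x where "x \<in> seqs n" "m0 = phi0' x" by (rule imageE) simp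
      then have "psi' m0 m2 = psi (phi0 x) m2" "phi0 x \<in> M0" using wc(3)
        unfolding psi'_def phi0'_def by auto
      then show ?thesis using wc(5) that(2) by simp
    qed
  qed
  have err: "wak_error_unif phi0' phi2 psi' (joint_type_class n P) = wak_error_unif phi0 phi2 psi (joint_type_class n P)"
    unfolding wak_error_unif_def psi'_def phi0'_def by simp
  have last: "log 2 (card {xs \<in> T. phi0' xs = l}) \<le> log 2 (real (card T) / real (card M0))" for l
  proof (cases "card {xs \<in> T. phi0' xs = l} = 0")
    case True
    show ?thesis
    proof (cases "T = {}")
      case True2: True then show ?thesis using True by simp
    next
      case False
      then have "real (card T) / real (card M0) \<ge> 1" using TM[OF False] M0pos by simp
      then show ?thesis using True by simp
    qed
  next
    case False
    then have ne: "T \<noteq> {}" by auto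
    have "real (card {xs \<in> T. phi0' xs = l}) \<le> real k" using bin[of l] by simp
    also have "\<dots> \<le> real (card T) / real (card M0)" unfolding k_def by (rule of_nat_div_le_of_nat)
    finally have le: "real (card {xs \<in> T. phi0' xs = l}) \<le> real (card T) / real (card M0)" .
    show ?thesis using False le by (subst log_le_cancel_iff) auto
  qed
  show ?thesis
    apply (rule exI[of _ M0'], rule exI[of _ M2], rule exI[of _ phi0'], rule exI[of _ phi2], rule exI[of _ psi'])
    using wc' logM0' logn logX err last unfolding T_def by auto
qed

end
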